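(* Let $Q$ be a finite set with $|Q|\ge 2$, and let $\mathrm{sel}(Q)$ be the smallest cardinality of a selective family for $Q$. If $m$ is the least positive integer such that $|Q|\le\binom{m}{\lfloor m/2\rfloor}$, then $\mathrm{sel}(Q)=m$.
   Context: A family $\mathscr{S}=\{S_i:i\in I\}$ of distinct nonempty subsets of $Q$ is selective for $Q$ if for every $q\in Q$ there is a nonempty $I(q)\subseteq I$ with $\{q\}=\bigcap_{i\in I(q)}S_i$. (The family of all singletons $\{q\}$, $q\in Q$, is always selective, so $\mathrm{sel}(Q)$ is well defined.) *)

theory Defs
  imports Main
begin

text \<open>A family of distinct nonempty subsets of Q (represented as a set of sets,
so distinctness is automatic) is selective for Q if every singleton {q}, q in Q,
is the intersection of some nonempty subfamily.\<close>
definition selective :: "'a set set \<Rightarrow> 'a set \<Rightarrow> bool" where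
  "selective F Q \<longleftrightarrow>
     (\<forall>S\<in>F. S \<noteq> {} \<and> S \<subseteq> Q) \<and>
     (\<forall>q\<in>Q. \<exists>G. G \<noteq> {} \<and> G \<subseteq> F \<and> \<Inter>G = {q})"

definition sel :: "'a set \<Rightarrow> nat" where
  "sel Q = (LEAST n. \<exists>F. finite F \<and> selective F Q \<and> card F = n)"

end

theory Submission
  imports Defs Complex_Main "HOL-Combinatorics.Multiset_Permutations"
begin

lemma count_prefix:
  assumes fU: "finite U" and XU: "X \<subseteq> U"
  shows "card {xs\<in>permutations_of_set U. set (take (card X) xs) = X}
         = fact (card X) * fact (card U - card X)"
proof -
  have fX: "finite X" using fU XU finite_subset by blast
  let ?f = "\<lambda>(ys, zs). ys @ zs"
  let ?D = "permutations_of_set X \<times> permutations_of_set (U - X)"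
  have inj: "inj_on ?f ?D"
  proof (rule inj_onI, clarsimp)
    fix ys zs ys' zs'
    assume a: "ys \<in> permutations_of_set X" "zs \<in> permutations_of_set (U - X)"
      "ys' \<in> permutations_of_set X" "zs' \<in> permutations_of_set (U - X)"
      "ys @ zs = ys' @ zs'"
    have "length ys = card X" "length ys' = card X" using a
      by (auto simp: permutations_of_set_def distinct_card[symmetric])
    then show "ys = ys' \<and> zs = zs'" using a(5) by (simp add: append_eq_append_conv)
  qed
  have img: "?f ` ?D = {xs\<in>permutations_of_set U. set (take (card X) xs) = X}"
  proof
    show "?f ` ?D \<subseteq> {xs\<in>permutations_of_set U. set (take (card X) xs) = X}"
    proof
      fix xs assume "xs \<in> ?f ` ?D"
      then obtain ys zs where a: "ys \<in> permutations_of_set X" "zs \<in> permutations_of_set (U - X)"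
        and xs: "xs = ys @ zs" by auto
      have l: "length ys = card X" using a by (auto simp: permutations_of_set_def distinct_card[symmetric])
      show "xs \<in> {xs\<in>permutations_of_set U. set (take (card X) xs) = X}"
        using a l XU xs by (auto simp: permutations_of_set_def)
    qed
  next
    show "{xs\<in>permutations_of_set U. set (take (card X) xs) = X} \<subseteq> ?f ` ?D"
    proof clarify
      fix xs assume a: "xs \<in> permutations_of_set U" "set (take (card X) xs) = X"
      have d: "distinct xs" "set xs = U" using a by (auto simp: permutations_of_set_def)
      have disj: "set (take (card X) xs) \<inter> set (drop (card X) xs) = {}"
        using set_take_disj_set_drop_if_distinct[OF d(1), of "card X" "card X"] by simp
      have un: "set (take (card X) xs) \<union> set (drop (card X) xs) = U"
        using d(2) by (metis append_take_drop_id set_append)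
      have "take (card X) xs \<in> permutations_of_set X"
        using a d by (auto simp: permutations_of_set_def)
      moreover have "drop (card X) xs \<in> permutations_of_set (U - X)"
        using a d disj un by (auto simp: permutations_of_set_def)
      ultimately show "xs \<in> ?f ` ?D"
        by (intro image_eqI[of _ _ "(take (card X) xs, drop (card X) xs)"]) auto
    qed
  qed
  have "card (?f ` ?D) = card ?D" using card_image[OF inj] .
  also have "\<dots> = fact (card X) * fact (card U - card X)"
    using fX fU XU by (simp add: card_cartesian_product card_Diff_subset)
  finally show ?thesis using img by simp
qed

lemma sperner:
  assumes fU: "finite U" and AU: "A \<subseteq> Pow U"
    and anti: "\<forall>X\<in>A. \<forall>Y\<in>A. X \<subseteq> Y \<longrightarrow> X = Y"
  shows "card A \<le> card U choose (card U div 2)"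
proof -
  define n where "n = card U"
  define M :: nat where "M = fact (n div 2) * fact (n - n div 2)"
  define C where "C X = {xs\<in>permutations_of_set U. set (take (card X) xs) = X}" for X
  have fA: "finite A" using AU fU by (meson finite_Pow_iff finite_subset)
  have Mpos: "M > 0" by (simp add: M_def)
  have Mfact: "M * (n choose (n div 2)) = fact n"
    using binomial_fact_lemma[of "n div 2" n] by (simp add: M_def)
  have cardC: "card (C X) \<ge> M" if "X \<in> A" for X
  proof -
    have XU: "X \<subseteq> U" using that AU by auto
    have k: "card X \<le> n" using XU fU card_mono n_def by blast
    have "card (C X) = fact (card X) * fact (n - card X)"
      unfolding C_def n_def using count_prefix[OF fU XU] .
    moreover have "fact (card X) * fact (n - card X) * (n choose card X) = (fact n :: nat)"
      using binomial_fact_lemma[OF k] .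
    moreover have "(n choose card X) \<le> n choose (n div 2)" by (rule binomial_maximum)
    moreover have "(n choose card X) > 0" using k by simp
    ultimately show ?thesis using Mfact
      by (metis mult_le_cancel1 mult.commute not_le nat_mult_less_cancel_disj)
  qed
  have disj: "C X \<inter> C Y = {}" if "X \<in> A" "Y \<in> A" "X \<noteq> Y" for X Y
  proof (rule ccontr)
    assume "C X \<inter> C Y \<noteq> {}"
    then obtain xs where "set (take (card X) xs) = X" "set (take (card Y) xs) = Y"
      unfolding C_def by auto
    then have "X \<subseteq> Y \<or> Y \<subseteq> X"
      by (metis nat_le_linear set_take_subset_set_take)
    then show False using anti that by blast
  qed
  have "card A * M \<le> (\<Sum>X\<in>A. card (C X))"
    using cardC sum_mono[of A "\<lambda>_. M" "\<lambda>X. card (C X)"] by simp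
  also have "\<dots> = card (\<Union>X\<in>A. C X)"
    using card_UN_disjoint[OF fA, of C] disj by (simp add: C_def)
  also have "\<dots> \<le> card (permutations_of_set U)"
    by (rule card_mono) (auto simp: C_def)
  also have "\<dots> = fact n" using fU n_def by simp
  finally have "card A * M \<le> (n choose (n div 2)) * M" using Mfact by (simp add: mult.commute)
  then show ?thesis using Mpos n_def by simp
qed


lemma sel_lower:
  assumes fQ: "finite Q" and fF: "finite F" and sF: "selective F Q" and Qne: "Q \<noteq> {}"
  shows "0 < card F \<and> card Q \<le> card F choose (card F div 2)"
proof -
  define \<phi> where "\<phi> q = {S\<in>F. q \<in> S}" for q
  have sep: "\<exists>S\<in>F. q \<in> S \<and> p \<notin> S" if "q \<in> Q" "p \<noteq> q" for p q
  proof -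
    have "\<forall>q\<in>Q. \<exists>G. G \<noteq> {} \<and> G \<subseteq> F \<and> \<Inter>G = {q}" using sF unfolding selective_def by simp
    then have "\<exists>G. G \<noteq> {} \<and> G \<subseteq> F \<and> \<Inter>G = {q}" using that(1) by (rule bspec)
    then obtain G where G: "G \<noteq> {}" "G \<subseteq> F" "\<Inter>G = {q}" by (elim exE conjE)
    have "p \<notin> \<Inter>G" using G(3) that(2) by simp
    then obtain S where "S \<in> G" "p \<notin> S" by blast
    moreover have "q \<in> \<Inter>G" using G(3) by simp
    then have "q \<in> S" using \<open>S \<in> G\<close> by blast
    ultimately show ?thesis using G by blast
  qed
  have notsub: "\<not> \<phi> q \<subseteq> \<phi> p" if "q \<in> Q" "p \<noteq> q" for p q
    using sep[OF that] unfolding \<phi>_def by auto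
  have inj: "inj_on \<phi> Q"
  proof (rule inj_onI, rule ccontr)
    fix x y assume "x \<in> Q" "y \<in> Q" "\<phi> x = \<phi> y" "x \<noteq> y"
    then show False using notsub[of x y] by simp
  qed
  obtain q0 where "q0 \<in> Q" using Qne by auto
  have "\<forall>q\<in>Q. \<exists>G. G \<noteq> {} \<and> G \<subseteq> F \<and> \<Inter>G = {q}" using sF unfolding selective_def by simp
  then have "\<exists>G. G \<noteq> {} \<and> G \<subseteq> F \<and> \<Inter>G = {q0}" using \<open>q0 \<in> Q\<close> by (rule bspec)
  then obtain G where "G \<noteq> {}" "G \<subseteq> F" by (elim exE conjE)
  then have Fne: "F \<noteq> {}" by auto
  have "card (\<phi> ` Q) \<le> card F choose (card F div 2)"
  proof (rule sperner[OF fF])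
    show "\<phi> ` Q \<subseteq> Pow F" by (auto simp: \<phi>_def)
    show "\<forall>X\<in>\<phi> ` Q. \<forall>Y\<in>\<phi> ` Q. X \<subseteq> Y \<longrightarrow> X = Y"
    proof (intro ballI impI)
      fix X Y assume "X \<in> \<phi> ` Q" "Y \<in> \<phi> ` Q" "X \<subseteq> Y"
      then obtain x y where "x \<in> Q" "y \<in> Q" "X = \<phi> x" "Y = \<phi> y" "\<phi> x \<subseteq> \<phi> y" by auto
      then show "X = Y" using notsub[of x y] by (cases "x = y") auto
    qed
  qed
  then show ?thesis using card_image[OF inj] Fne fF by (simp add: card_gt_0_iff)
qed

theorem mainTheorem8:
  fixes Q :: "'a set" and m :: nat
  assumes "finite Q" and "card Q \<ge> 2"
    and "m = (LEAST k::nat. 0 < k \<and> card Q \<le> k choose (k div 2))"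
  shows "sel Q = m"
proof -
  let ?P = "\<lambda>k::nat. 0 < k \<and> card Q \<le> k choose (k div 2)"
  have Qne: "Q \<noteq> {}" using assms(2) by auto
  have ex: "?P (card Q)"
    using assms(2) binomial_maximum[of "card Q" 1] by simp
  have Pm: "?P m" using LeastI[of ?P, OF ex] assms(3) by simp
  have minm: "m \<le> k" if "?P k" for k using Least_le[of ?P, OF that] assms(3) by simp
  have m2: "m \<ge> 2"
  proof (rule ccontr)
    assume "\<not> m \<ge> 2"
    then have "m = 1" using Pm by auto
    then show False using Pm assms(2) by simp
  qed
  define R where "R n = (\<exists>F. finite F \<and> selective F Q \<and> card F = n)" for n
  have lower: "m \<le> n" if Rn: "R n" for n
  proof -
    obtain F where F: "finite F" "selective F Q" "card F = n" using Rn unfolding R_def by (elim exE conjE)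
    have "0 < n \<and> card Q \<le> n choose (n div 2)" using sel_lower[OF assms(1) F(1,2) Qne] F(3) by simp
    then show ?thesis by (rule minm)
  qed
  define k where "k = m div 2"
  have k1: "k \<ge> 1" using m2 k_def by simp
  define B where "B = {A. A \<subseteq> {..<m} \<and> card A = k}"
  have "card B = m choose k" unfolding B_def using n_subsets[of "{..<m}" k] by simp
  then have "card Q \<le> card B" using Pm k_def by simp
  then obtain \<phi> where \<phi>: "\<phi> ` Q \<subseteq> B" "inj_on \<phi> Q"
  proof -
    have "finite B" unfolding B_def by (rule finite_subset[of _ "Pow {..<m}"]) auto
    from card_le_inj[OF assms(1) this \<open>card Q \<le> card B\<close>]
    obtain f where "f ` Q \<subseteq> B" "inj_on f Q" by (elim exE conjE)
    then show ?thesis by (rule that)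
  qed
  define S where "S i = {q\<in>Q. i \<in> \<phi> q}" for i
  define F where "F = S ` {..<m} - {{}}"
  have fF: "finite F" unfolding F_def by simp
  have "card F \<le> card (S ` {..<m})" unfolding F_def by (rule card_mono) auto
  also have "\<dots> \<le> m" using card_image_le[of "{..<m}" S] by simp
  finally have cF: "card F \<le> m" .
  have selF: "selective F Q"
    unfolding selective_def
  proof (intro conjI)
    show "\<forall>T\<in>F. T \<noteq> {} \<and> T \<subseteq> Q" unfolding F_def S_def by auto
  next
    show "\<forall>q\<in>Q. \<exists>G. G \<noteq> {} \<and> G \<subseteq> F \<and> \<Inter>G = {q}"
    proof
    fix q assume q: "q \<in> Q"
    have pq: "\<phi> q \<subseteq> {..<m}" "card (\<phi> q) = k" using \<phi> q B_def by auto
    then have "\<phi> q \<noteq> {}" using k1 by auto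
    then obtain i where i: "i \<in> \<phi> q" by auto
    let ?G = "{T\<in>F. q \<in> T}"
    have "S i \<in> F" using i pq q unfolding F_def S_def by auto
    moreover have "q \<in> S i" using i q unfolding S_def by auto
    ultimately have Gne: "?G \<noteq> {}" by blast
    have "\<Inter>?G = {q}"
    proof
      show "{q} \<subseteq> \<Inter>?G" by auto
      show "\<Inter>?G \<subseteq> {q}"
      proof
        fix p assume p: "p \<in> \<Inter>?G"
        have pQ: "p \<in> Q" using p \<open>S i \<in> F\<close> \<open>q \<in> S i\<close> unfolding S_def by auto
        show "p \<in> {q}"
        proof (rule ccontr)
          assume "p \<notin> {q}"
          then have ne: "\<phi> p \<noteq> \<phi> q" using \<phi>(2) pQ q by (auto dest: inj_onD)
          have pp: "\<phi> p \<subseteq> {..<m}" "card (\<phi> p) = k" using \<phi> pQ B_def by auto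
          have "\<not> \<phi> q \<subseteq> \<phi> p"
          proof
            assume sub: "\<phi> q \<subseteq> \<phi> p"
            have "finite (\<phi> p)" using finite_subset[OF pp(1)] by simp
            then have "\<phi> q = \<phi> p" using card_subset_eq sub pp(2) pq(2) by metis
            then show False using ne by simp
          qed
          then obtain j where j: "j \<in> \<phi> q" "j \<notin> \<phi> p" by auto
          have "S j \<in> ?G" using j pq q unfolding F_def S_def by auto
          then have "p \<in> S j" by (rule InterD[OF p])
          then show False using j unfolding S_def by auto
        qed
      qed
    qed
    moreover have Gsub: "?G \<subseteq> F" by blast
    ultimately show "\<exists>G. G \<noteq> {} \<and> G \<subseteq> F \<and> \<Inter>G = {q}" using Gne by (intro exI[of _ ?G] conjI) assumption+
    qed
  qed
  have RF: "R (card F)" unfolding R_def using fF selF by (intro exI[of _ F] conjI) simp_all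
  have "sel Q = (LEAST n. R n)" unfolding sel_def R_def by simp
  moreover have "(LEAST n. R n) \<le> m" using Least_le[of R, OF RF] cF by simp
  moreover have "m \<le> (LEAST n. R n)" using LeastI[of R, OF RF] by (rule lower)
  ultimately show ?thesis by simp
qed

end
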